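(* For every positive integer $N$ and every admissible index $\boldsymbol{k}=(k_1,\dots,k_r)$, \[ \zeta^{\diamondsuit\star}_N(\boldsymbol{k})=\sum_{A\subset[r]^1_{\boldsymbol{k}}}\ \sum_{(n_1,\dots,n_r)\in S^\star_{r,N}(A)}\Bigl(\prod_{i\in A}\frac1{N-n_i}\Bigr)\Bigl(\prod_{i\in[r]\setminus A}\frac1{n_i^{k_i}}\Bigr), \] where $S^\star_{r,N}(A)$ is the set of $(n_1,\dots,n_r)\in[N-1]^r$ such that for each $i\in[r-1]$: $n_i\le n_{i+1}$ if $i\in A$ or $i+1\notin A$, and $n_i<n_{i+1}$ if $i\notin A$ and $i+1\in A$.
   Context: $[n]=\{1,\dots,n\}$. An index is a tuple of positive integers; admissible = nonempty with last entry $\ge2$. For admissible $\boldsymbol{k}=(k_1,\dots,k_r)$: $[r]^1_{\boldsymbol{k}}=\{i:k_i=1\}$, $S_{r,N}(A)=\{(n_1,\dots,n_r)\in[N-1]^r: n_i\le n_{i+1}\ (i\in A),\ n_i<n_{i+1}\ (i\in[r-1]\setminus A)\}$, $\zeta^\diamondsuit_N(\boldsymbol{k})=\sum_{A\subset[r]^1_{\boldsymbol{k}}}\sum_{S_{r,N}(A)}\prod_{i\in A}(N-n_i)^{-1}\prod_{i\notin A}n_i^{-k_i}$. Write $\boldsymbol{l}\preceq\boldsymbol{k}$ if $\boldsymbol{l}$ is obtained by filling each $\square$ in $(k_1\,\square\cdots\square\,k_r)$ with a comma or a plus sign. $\zeta^{\diamondsuit\star}_N(\boldsymbol{k})=\sum_{\boldsymbol{l}\preceq\boldsymbol{k}}\zeta^\diamondsuit_N(\boldsymbol{l})$.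 *)

theory Defs
  imports Complex_Main
begin

text \<open>Indices are lists of naturals; positions are 1-based: entry i of xs is xs ! (i - 1).\<close>

definition is_index :: "nat list \<Rightarrow> bool" where
  "is_index k \<longleftrightarrow> (\<forall>x\<in>set k. 0 < x)"

definition admissible :: "nat list \<Rightarrow> bool" where
  "admissible k \<longleftrightarrow> is_index k \<and> k \<noteq> [] \<and> 2 \<le> last k"

definition ones :: "nat list \<Rightarrow> nat set" where
  "ones k = {i \<in> {1..length k}. k ! (i - 1) = 1}"

definition S_set :: "nat \<Rightarrow> nat \<Rightarrow> nat set \<Rightarrow> nat list set" where
  "S_set r N A = {ns. length ns = r \<and> set ns \<subseteq> {1..N - 1} \<and>
     (\<forall>i\<in>{1..r - 1}. (i \<in> A \<longrightarrow> ns ! (i - 1) \<le> ns ! i) \<and>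
                      (i \<notin> A \<longrightarrow> ns ! (i - 1) < ns ! i))}"

definition S_star_set :: "nat \<Rightarrow> nat \<Rightarrow> nat set \<Rightarrow> nat list set" where
  "S_star_set r N A = {ns. length ns = r \<and> set ns \<subseteq> {1..N - 1} \<and>
     (\<forall>i\<in>{1..r - 1}. ((i \<in> A \<or> i + 1 \<notin> A) \<longrightarrow> ns ! (i - 1) \<le> ns ! i) \<and>
                      ((i \<notin> A \<and> i + 1 \<in> A) \<longrightarrow> ns ! (i - 1) < ns ! i))}"

definition term_diamond :: "nat \<Rightarrow> nat list \<Rightarrow> nat set \<Rightarrow> nat list \<Rightarrow> real" where
  "term_diamond N k A ns =
     (\<Prod>i\<in>A. 1 / (real N - real (ns ! (i - 1)))) *
     (\<Prod>i\<in>{1..length k} - A. 1 / real (ns ! (i - 1)) ^ (k ! (i - 1)))"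

definition zeta_diamond :: "nat \<Rightarrow> nat list \<Rightarrow> real" where
  "zeta_diamond N k = (\<Sum>A\<in>Pow (ones k). \<Sum>ns\<in>S_set (length k) N A. term_diamond N k A ns)"

text \<open>All indices obtained by filling each box in (k_1 [] ... [] k_r) with a comma or a plus,
  listed once per filling.\<close>
fun add_hd :: "nat \<Rightarrow> nat list \<Rightarrow> nat list" where
  "add_hd a [] = [a]"
| "add_hd a (h # t) = (a + h) # t"

fun fillings :: "nat list \<Rightarrow> nat list list" where
  "fillings [] = [[]]"
| "fillings [k] = [[k]]"
| "fillings (k # k' # ks) =
     map (\<lambda>l. k # l) (fillings (k' # ks)) @ map (add_hd k) (fillings (k' # ks))"

definition zeta_diamond_star :: "nat \<Rightarrow> nat list \<Rightarrow> real" where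
  "zeta_diamond_star N k = sum_list (map (zeta_diamond N) (fillings k))"

end

theory Submission
  imports Defs
begin

definition Sg :: "(bool \<Rightarrow> bool \<Rightarrow> nat \<Rightarrow> nat \<Rightarrow> bool) \<Rightarrow> nat \<Rightarrow> nat \<Rightarrow> nat set \<Rightarrow> nat list set" where
  "Sg rel r N A = {ns. length ns = r \<and> set ns \<subseteq> {1..N - 1} \<and>
     (\<forall>i\<in>{1..r - 1}. rel (i \<in> A) (i + 1 \<in> A) (ns ! (i - 1)) (ns ! i))}"

definition relD :: "bool \<Rightarrow> bool \<Rightarrow> nat \<Rightarrow> nat \<Rightarrow> bool" where
  "relD p q x y = (if p then x \<le> y else x < y)"
definition relS :: "bool \<Rightarrow> bool \<Rightarrow> nat \<Rightarrow> nat \<Rightarrow> bool" where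
  "relS p q x y = (if \<not> p \<and> q then x < y else x \<le> y)"

lemma S_set_Sg: "S_set r N A = Sg relD r N A"
  unfolding S_set_def Sg_def relD_def by auto
lemma S_star_set_Sg: "S_star_set r N A = Sg relS r N A"
  unfolding S_star_set_def Sg_def relS_def by auto

lemma finite_Sg: "finite (Sg rel r N A)"
proof -
  have "Sg rel r N A \<subseteq> {ns. set ns \<subseteq> {1..N-1} \<and> length ns = r}"
    unfolding Sg_def by auto
  moreover have "finite {ns. set ns \<subseteq> {1..N-1} \<and> length ns = r}"
    by (rule finite_lists_length_eq) simp
  ultimately show ?thesis by (rule finite_subset)
qed

definition ins :: "bool \<Rightarrow> nat set \<Rightarrow> nat set" where
  "ins b B = (if b then {1} else {}) \<union> Suc ` B"

lemma ones_sub: "ones k \<subseteq> {1..length k}" unfolding ones_def by auto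

lemma ones_Cons: "ones (a # k) = ins (a = 1) (ones k)"
proof -
  have "i \<in> ones (a # k) \<longleftrightarrow> i \<in> ins (a = 1) (ones k)" for i
  proof (cases i)
    case 0 then show ?thesis unfolding ones_def ins_def by auto
  next
    case (Suc j)
    show ?thesis
    proof (cases j)
      case 0 then show ?thesis using Suc unfolding ones_def ins_def by auto
    next
      case (Suc j')
      then show ?thesis using \<open>i = Suc j\<close> unfolding ones_def ins_def by auto
    qed
  qed
  then show ?thesis by blast
qed

lemma ins_mem1: "0 \<notin> B \<Longrightarrow> (1 \<in> ins b B) = b"
  unfolding ins_def by auto
lemma ins_memSuc: "0 < j \<Longrightarrow> (Suc j \<in> ins b B) = (j \<in> B)"
  unfolding ins_def by auto

lemma Pow_ones_Cons: "Pow (ones (a # k)) = (\<lambda>(b, B). ins b B) ` ((if a = 1 then {True, False} else {False}) \<times> Pow (ones k))"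
proof
  show "(\<lambda>(b, B). ins b B) ` ((if a = 1 then {True, False} else {False}) \<times> Pow (ones k)) \<subseteq> Pow (ones (a # k))"
    unfolding ones_Cons ins_def by auto
next
  show "Pow (ones (a # k)) \<subseteq> (\<lambda>(b, B). ins b B) ` ((if a = 1 then {True, False} else {False}) \<times> Pow (ones k))"
  proof
    fix A assume A: "A \<in> Pow (ones (a # k))"
    define B where "B = {j. 0 < j \<and> Suc j \<in> A}"
    have A0: "0 \<notin> A" using A ones_sub[of "a#k"] by auto
    have "A = ins (1 \<in> A) B"
    proof -
      have "i \<in> A \<longleftrightarrow> i \<in> ins (1 \<in> A) B" for i
        using A0 unfolding B_def ins_def by (cases i) (auto, metis gr0I image_eqI mem_Collect_eq)
      then show ?thesis by blast
    qed
    moreover have "B \<subseteq> ones k"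
    proof
      fix x assume "x \<in> B"
      then have "Suc x \<in> ins (a = 1) (ones k)" "0 < x" using A unfolding B_def ones_Cons by auto
      then show "x \<in> ones k" using ins_memSuc by blast
    qed
    moreover have "1 \<in> A \<longrightarrow> a = 1"
    proof
      assume "1 \<in> A"
      then have "1 \<in> ins (a = 1) (ones k)" using A unfolding ones_Cons by auto
      moreover have "0 \<notin> ones k" using ones_sub[of k] by auto
      ultimately show "a = 1" using ins_mem1 by blast
    qed
    ultimately show "A \<in> (\<lambda>(b, B). ins b B) ` ((if a = 1 then {True, False} else {False}) \<times> Pow (ones k))"
      by (auto intro!: image_eqI[where x="(1 \<in> A, B)"])
  qed
qed

lemma inj_ins: "inj_on (\<lambda>(b, B). ins b B) (UNIV \<times> Pow (ones k))"
proof (rule inj_onI, clarify)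
  fix b B b' B' assume B: "B \<subseteq> ones k" "B' \<subseteq> ones k" and eq: "ins b B = ins b' B'"
  have 0: "0 \<notin> B" "0 \<notin> B'" using B ones_sub[of k] by auto
  have "b = b'" using ins_mem1[OF 0(1), of b] ins_mem1[OF 0(2), of b'] eq by simp
  moreover have "B = B'"
  proof -
    have "j \<in> B \<longleftrightarrow> j \<in> B'" for j
      using 0 ins_memSuc[of j b B] ins_memSuc[of j b' B'] eq by (cases j) auto
    then show ?thesis by blast
  qed
  ultimately show "b = b' \<and> B = B'" by simp
qed

lemma all_split1: "(\<forall>i\<in>{1..r}. P i) \<longleftrightarrow> ((r \<noteq> 0 \<longrightarrow> P 1) \<and> (\<forall>j\<in>{1..r - 1}. P (Suc j)))"
proof (intro iffI conjI impI ballI)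
  fix j assume "\<forall>i\<in>{1..r}. P i" "j \<in> {1..r-1}" then show "P (Suc j)" by auto
next
  assume "\<forall>i\<in>{1..r}. P i" "r \<noteq> 0" then show "P 1" by auto
next
  fix i assume H: "(r \<noteq> 0 \<longrightarrow> P 1) \<and> (\<forall>j\<in>{1..r - 1}. P (Suc j))" "i \<in> {1..r}"
  show "P i"
  proof (cases "i = 1")
    case True then show ?thesis using H by auto
  next
    case False
    then obtain j where "i = Suc j" "j \<in> {1..r-1}" using H(2) by (cases i) auto
    then show ?thesis using H by auto
  qed
qed

lemma Sg_Cons:
  assumes "0 \<notin> B"
  shows "(m # ns \<in> Sg rel (Suc r) N (ins b B)) \<longleftrightarrow>
    (m \<in> {1..N-1} \<and> ns \<in> Sg rel r N B \<and> (r \<noteq> 0 \<longrightarrow> rel b (1 \<in> B) m (hd ns)))"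
proof -
  let ?P = "\<lambda>i. rel (i \<in> ins b B) (i + 1 \<in> ins b B) ((m#ns) ! (i - 1)) ((m#ns) ! i)"
  have "(\<forall>i\<in>{1..r}. ?P i) \<longleftrightarrow> ((r \<noteq> 0 \<longrightarrow> ?P 1) \<and> (\<forall>j\<in>{1..r - 1}. ?P (Suc j)))"
    by (rule all_split1)
  moreover have "?P 1 \<longleftrightarrow> rel b (1 \<in> B) m (ns ! 0)"
    using ins_mem1[OF assms, of b] ins_memSuc[of 1 b B] by (simp add: numeral_2_eq_2)
  moreover have "j \<in> {1..r-1} \<Longrightarrow> ?P (Suc j) \<longleftrightarrow> rel (j \<in> B) (j + 1 \<in> B) (ns ! (j - 1)) (ns ! j)" for j
    using ins_memSuc[of j b B] ins_memSuc[of "Suc j" b B] by (cases j) auto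
  moreover have "ns \<noteq> [] \<Longrightarrow> hd ns = ns ! 0" by (simp add: hd_conv_nth)
  ultimately have E: "length ns = r \<Longrightarrow> (\<forall>i\<in>{1..r}. ?P i) \<longleftrightarrow> ((r \<noteq> 0 \<longrightarrow> rel b (1 \<in> B) m (hd ns)) \<and> (\<forall>j\<in>{1..r-1}. rel (j \<in> B) (j + 1 \<in> B) (ns ! (j - 1)) (ns ! j)))"
    by (metis (no_types, lifting) length_0_conv)
  have L: "(m # ns \<in> Sg rel (Suc r) N (ins b B)) \<longleftrightarrow> length ns = r \<and> m \<in> {1..N-1} \<and> set ns \<subseteq> {1..N-1} \<and> (\<forall>i\<in>{1..r}. ?P i)"
    unfolding Sg_def by simp
  have R: "ns \<in> Sg rel r N B \<longleftrightarrow> length ns = r \<and> set ns \<subseteq> {1..N-1} \<and> (\<forall>j\<in>{1..r-1}. rel (j \<in> B) (j + 1 \<in> B) (ns ! (j - 1)) (ns ! j))"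
    unfolding Sg_def by simp
  show ?thesis using L R E by blast
qed

lemma Sg_Suc_Cons: "ns \<in> Sg rel (Suc r) N A \<Longrightarrow> \<exists>m ns'. ns = m # ns'"
  unfolding Sg_def by (cases ns) auto

definition w :: "nat \<Rightarrow> nat \<Rightarrow> nat \<Rightarrow> bool \<Rightarrow> real" where
  "w N a m b = (if b then (if a = 1 then 1 / (real N - real m) else 0) else 1 / real m ^ a)"

lemma prod_ins:
  assumes "0 \<notin> B" "finite B"
  shows "(\<Prod>i\<in>ins b B. f i) = (if b then f 1 else 1) * (\<Prod>i\<in>B. f (Suc i))"
proof -
  have d: "(if b then {1} else {}) \<inter> Suc ` B = {}" using assms by auto
  have "(\<Prod>i\<in>ins b B. f i) = (\<Prod>i\<in>(if b then {1} else {}). f i) * (\<Prod>i\<in>Suc ` B. f i)"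
    unfolding ins_def using assms d by (intro prod.union_disjoint) auto
  also have "(\<Prod>i\<in>Suc ` B. f i) = (\<Prod>i\<in>B. f (Suc i))"
    by (subst prod.reindex) auto
  finally show ?thesis by simp
qed

lemma diff_ins:
  assumes "B \<subseteq> {1..r}"
  shows "{1..Suc r} - ins b B = ins (\<not> b) ({1..r} - B)"
proof -
  have "i \<in> {1..Suc r} - ins b B \<longleftrightarrow> i \<in> ins (\<not> b) ({1..r} - B)" for i
    using assms unfolding ins_def by (cases i) auto
  then show ?thesis by blast
qed

lemma term_Cons:
  assumes "B \<subseteq> {1..length k}" "b \<longrightarrow> a = 1"
  shows "term_diamond N (a#k) (ins b B) (m#ns) = w N a m b * term_diamond N k B ns"
proof -
  have fB: "finite B" "0 \<notin> B" using assms(1) finite_subset by auto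
  have p1: "(\<Prod>i\<in>ins b B. 1 / (real N - real ((m#ns) ! (i - 1)))) =
     (if b then 1 / (real N - real m) else 1) * (\<Prod>i\<in>B. 1 / (real N - real (ns ! (i - 1))))"
  proof -
    have "(\<Prod>i\<in>B. 1 / (real N - real ((m#ns) ! (Suc i - 1)))) = (\<Prod>i\<in>B. 1 / (real N - real (ns ! (i - 1))))"
      using fB by (intro prod.cong) (auto simp: nth_Cons')
    then show ?thesis by (subst prod_ins[OF fB(2,1)]) simp
  qed
  have p2: "(\<Prod>i\<in>{1..length (a#k)} - ins b B. 1 / real ((m#ns) ! (i - 1)) ^ ((a#k) ! (i - 1))) =
     (if b then 1 else 1 / real m ^ a) * (\<Prod>i\<in>{1..length k} - B. 1 / real (ns ! (i - 1)) ^ (k ! (i - 1)))"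
  proof -
    have f2: "finite ({1..length k} - B)" "0 \<notin> {1..length k} - B" by auto
    have "(\<Prod>i\<in>{1..length k} - B. 1 / real ((m#ns) ! (Suc i - 1)) ^ ((a#k) ! (Suc i - 1))) = (\<Prod>i\<in>{1..length k} - B. 1 / real (ns ! (i - 1)) ^ (k ! (i - 1)))"
      by (intro prod.cong) (auto simp: nth_Cons')
    then show ?thesis unfolding diff_ins[OF assms(1), of b] length_Cons
      by (subst prod_ins[OF f2(2,1)]) simp
  qed
  show ?thesis unfolding term_diamond_def p1 p2 w_def using assms(2) by auto
qed

lemma Sg_ins_eq:
  assumes "0 \<notin> B"
  shows "Sg rel (Suc r) N (ins b B) = (\<lambda>(m, ns'). m # ns') ` (SIGMA m:{1..N-1}. {ns'\<in>Sg rel r N B. r \<noteq> 0 \<longrightarrow> rel b (1 \<in> B) m (hd ns')})"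
proof
  show "Sg rel (Suc r) N (ins b B) \<subseteq> (\<lambda>(m, ns'). m # ns') ` (SIGMA m:{1..N-1}. {ns'\<in>Sg rel r N B. r \<noteq> 0 \<longrightarrow> rel b (1 \<in> B) m (hd ns')})"
  proof
    fix ns assume h: "ns \<in> Sg rel (Suc r) N (ins b B)"
    then obtain m ns' where e: "ns = m # ns'" using Sg_Suc_Cons by blast
    show "ns \<in> (\<lambda>(m, ns'). m # ns') ` (SIGMA m:{1..N-1}. {ns'\<in>Sg rel r N B. r \<noteq> 0 \<longrightarrow> rel b (1 \<in> B) m (hd ns')})"
      using h Sg_Cons[OF assms, of m ns' rel r N b] unfolding e by (auto intro!: image_eqI[where x="(m, ns')"])
  qed
next
  show "(\<lambda>(m, ns'). m # ns') ` (SIGMA m:{1..N-1}. {ns'\<in>Sg rel r N B. r \<noteq> 0 \<longrightarrow> rel b (1 \<in> B) m (hd ns')}) \<subseteq> Sg rel (Suc r) N (ins b B)"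
    using Sg_Cons[OF assms] by auto
qed

lemma dec:
  "(\<Sum>A\<in>Pow (ones (a#k)). \<Sum>ns\<in>Sg rel (Suc (length k)) N A. F A ns) =
   (\<Sum>b\<in>(if a = 1 then {True, False} else {False}). \<Sum>B\<in>Pow (ones k). \<Sum>m\<in>{1..N-1}.
      \<Sum>ns'\<in>{ns'\<in>Sg rel (length k) N B. length k \<noteq> 0 \<longrightarrow> rel b (1 \<in> B) m (hd ns')}. F (ins b B) (m # ns'))"
proof -
  let ?Bs = "(if a = 1 then {True, False} else {False})"
  let ?G = "\<lambda>A. \<Sum>ns\<in>Sg rel (Suc (length k)) N A. F A ns"
  have inj: "inj_on (\<lambda>(b, B). ins b B) (?Bs \<times> Pow (ones k))"
    by (rule inj_on_subset[OF inj_ins]) auto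
  have "(\<Sum>A\<in>Pow (ones (a#k)). ?G A) = (\<Sum>(b,B)\<in>?Bs \<times> Pow (ones k). ?G (ins b B))"
    unfolding Pow_ones_Cons by (subst sum.reindex[OF inj]) (simp add: case_prod_unfold)
  also have "\<dots> = (\<Sum>b\<in>?Bs. \<Sum>B\<in>Pow (ones k). ?G (ins b B))"
    by (rule sum.cartesian_product[symmetric])
  also have "\<dots> = (\<Sum>b\<in>?Bs. \<Sum>B\<in>Pow (ones k). \<Sum>m\<in>{1..N-1}.
      \<Sum>ns'\<in>{ns'\<in>Sg rel (length k) N B. length k \<noteq> 0 \<longrightarrow> rel b (1 \<in> B) m (hd ns')}. F (ins b B) (m # ns'))"
  proof (intro sum.cong refl)
    fix b B assume "B \<in> Pow (ones k)"
    then have B0: "0 \<notin> B" using ones_sub[of k] by auto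
    have inj2: "inj_on (\<lambda>(m, ns'). m # ns') X" for X :: "(nat \<times> nat list) set"
      by (rule inj_onI) auto
    show "?G (ins b B) = (\<Sum>m\<in>{1..N-1}.
      \<Sum>ns'\<in>{ns'\<in>Sg rel (length k) N B. length k \<noteq> 0 \<longrightarrow> rel b (1 \<in> B) m (hd ns')}. F (ins b B) (m # ns'))"
    proof -
      let ?S = "\<lambda>m. {ns'\<in>Sg rel (length k) N B. length k \<noteq> 0 \<longrightarrow> rel b (1 \<in> B) m (hd ns')}"
      have fin: "\<forall>m\<in>{1..N-1}. finite (?S m)" by (auto intro: finite_subset[OF _ finite_Sg])
      have "(\<Sum>m\<in>{1..N-1}. \<Sum>ns'\<in>?S m. F (ins b B) (m # ns')) = (\<Sum>(m, ns')\<in>Sigma {1..N-1} ?S. F (ins b B) (m # ns'))"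
        by (rule sum.Sigma[OF _ fin]) simp
      moreover have "?G (ins b B) = (\<Sum>(m, ns')\<in>Sigma {1..N-1} ?S. F (ins b B) (m # ns'))"
        unfolding Sg_ins_eq[OF B0]
        by (subst sum.reindex[OF inj2]) (simp add: case_prod_unfold)
      ultimately show ?thesis by simp
    qed
  qed
  finally show ?thesis .
qed

fun T :: "(bool \<Rightarrow> bool \<Rightarrow> nat \<Rightarrow> nat \<Rightarrow> bool) \<Rightarrow> nat \<Rightarrow> nat list \<Rightarrow> nat \<Rightarrow> bool \<Rightarrow> real" where
  "T rel N [] m b = 0"
| "T rel N [a] m b = w N a m b"
| "T rel N (a # c # l) m b = w N a m b * (\<Sum>m'\<in>{1..N-1}.
      (if rel b True m m' then T rel N (c # l) m' True else 0) + (if rel b False m m' then T rel N (c # l) m' False else 0))"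

lemma T_Cons: "k \<noteq> [] \<Longrightarrow> T rel N (a # k) m b = w N a m b * (\<Sum>m'\<in>{1..N-1}.
      (if rel b True m m' then T rel N k m' True else 0) + (if rel b False m m' then T rel N k m' False else 0))"
  by (cases k) auto

lemma w_True: "a \<noteq> 1 \<Longrightarrow> w N a m True = 0" unfolding w_def by simp

lemma main_gen:
  "k \<noteq> [] \<Longrightarrow> (\<Sum>A\<in>Pow (ones k). \<Sum>ns\<in>Sg rel (length k) N A. if \<phi> (1 \<in> A) (hd ns) then term_diamond N k A ns else 0)
    = (\<Sum>m\<in>{1..N-1}. (if \<phi> True m then T rel N k m True else 0) + (if \<phi> False m then T rel N k m False else 0))"
proof (induction k arbitrary: \<phi>)
  case Nil then show ?case by simp
next
  case (Cons a k)
  let ?Bs = "(if a = 1 then {True, False} else {False})"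
  let ?Filt = "\<lambda>b B m. {ns'\<in>Sg rel (length k) N B. length k \<noteq> 0 \<longrightarrow> rel b (1 \<in> B) m (hd ns')}"
  define R where "R b m = (\<Sum>B\<in>Pow (ones k). \<Sum>ns'\<in>?Filt b B m. term_diamond N k B ns')" for b m
  have "(\<Sum>A\<in>Pow (ones (a#k)). \<Sum>ns\<in>Sg rel (length (a#k)) N A. if \<phi> (1 \<in> A) (hd ns) then term_diamond N (a#k) A ns else 0)
     = (\<Sum>b\<in>?Bs. \<Sum>B\<in>Pow (ones k). \<Sum>m\<in>{1..N-1}. \<Sum>ns'\<in>?Filt b B m.
          if \<phi> (1 \<in> ins b B) (hd (m # ns')) then term_diamond N (a#k) (ins b B) (m # ns') else 0)"
    unfolding length_Cons by (rule dec)
  also have "\<dots> = (\<Sum>b\<in>?Bs. \<Sum>B\<in>Pow (ones k). \<Sum>m\<in>{1..N-1}. \<Sum>ns'\<in>?Filt b B m.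
          if \<phi> b m then w N a m b * term_diamond N k B ns' else 0)"
  proof (intro sum.cong refl)
    fix b B m ns' assume b: "b \<in> ?Bs" and B: "B \<in> Pow (ones k)"
    have B1: "B \<subseteq> {1..length k}" using B ones_sub[of k] by auto
    then have "0 \<notin> B" by auto
    then show "(if \<phi> (1 \<in> ins b B) (hd (m # ns')) then term_diamond N (a#k) (ins b B) (m # ns') else 0)
       = (if \<phi> b m then w N a m b * term_diamond N k B ns' else 0)"
      using term_Cons[OF B1, of b a N m ns'] ins_mem1[of B b] b by (auto split: if_splits)
  qed
  also have "\<dots> = (\<Sum>b\<in>?Bs. \<Sum>m\<in>{1..N-1}. if \<phi> b m then w N a m b * R b m else 0)"
  proof (intro sum.cong refl)
    fix b
    show "(\<Sum>B\<in>Pow (ones k). \<Sum>m\<in>{1..N-1}. \<Sum>ns'\<in>?Filt b B m. if \<phi> b m then w N a m b * term_diamond N k B ns' else 0)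
      = (\<Sum>m\<in>{1..N-1}. if \<phi> b m then w N a m b * R b m else 0)"
      unfolding R_def by (subst sum.swap) (auto intro!: sum.cong simp: sum_distrib_left)
  qed
  also have "\<dots> = (\<Sum>m\<in>{1..N-1}. \<Sum>b\<in>?Bs. if \<phi> b m then w N a m b * R b m else 0)"
    by (rule sum.swap)
  also have "\<dots> = (\<Sum>m\<in>{1..N-1}. (if \<phi> True m then T rel N (a#k) m True else 0) + (if \<phi> False m then T rel N (a#k) m False else 0))"
  proof (rule sum.cong[OF refl])
    fix m
    have TT: "T rel N (a#k) m b = w N a m b * R b m" for b
    proof (cases "k = []")
      case True
      have "Sg rel 0 N {} = {[]}" unfolding Sg_def by auto
      then have "R b m = 1" unfolding R_def True by (simp add: ones_def term_diamond_def)
      then show ?thesis using True by simp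
    next
      case False
      have "R b m = (\<Sum>B\<in>Pow (ones k). \<Sum>ns'\<in>Sg rel (length k) N B. if rel b (1 \<in> B) m (hd ns') then term_diamond N k B ns' else 0)"
        unfolding R_def using False by (simp add: sum.inter_filter[OF finite_Sg])
      also have "\<dots> = (\<Sum>m'\<in>{1..N-1}. (if rel b True m m' then T rel N k m' True else 0) + (if rel b False m m' then T rel N k m' False else 0))"
        by (rule Cons.IH[OF False])
      finally show ?thesis using T_Cons[OF False] by simp
    qed
    show "(\<Sum>b\<in>?Bs. if \<phi> b m then w N a m b * R b m else 0) = (if \<phi> True m then T rel N (a#k) m True else 0) + (if \<phi> False m then T rel N (a#k) m False else 0)"
      unfolding TT using w_True[of a N m] by (cases "a = 1") auto
  qed
  finally show ?case .
qed


lemma fill_shape: "l \<in> set (fillings (x # xs)) \<Longrightarrow> \<exists>h t. l = h # t \<and> x \<le> h"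
proof (induction xs arbitrary: x l)
  case Nil then show ?case by simp
next
  case (Cons y ys)
  then show ?case
  proof (cases "l \<in> set (map ((#) x) (fillings (y # ys)))")
    case True then show ?thesis by auto
  next
    case False
    then obtain l' where l': "l' \<in> set (fillings (y # ys))" "l = add_hd x l'" using Cons.prems by auto
    then obtain h t where "l' = h # t" using Cons.IH by blast
    then show ?thesis using l' by auto
  qed
qed

lemma sum_list_sum: "sum_list (map (\<lambda>l. \<Sum>m\<in>M. g l m) xs) = (\<Sum>m\<in>M. sum_list (map (\<lambda>l. g l m) xs))"
  by (induction xs) (auto simp: sum.distrib)

lemma sum_list_if: "sum_list (map (\<lambda>l. if P then f l else 0) xs) = (if P then sum_list (map f xs) else (0::real))"
  by (cases P) (auto simp: sum_list_const_mult)

lemma sum_list_add: "sum_list (map (\<lambda>l. f l + g l) xs) = sum_list (map f xs) + (sum_list (map g xs) :: real)"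
  by (induction xs) auto

lemma sum_list_div: "sum_list (map (\<lambda>l. f l / c) xs) = sum_list (map f xs) / (c::real)"
  by (induction xs) (auto simp: add_divide_distrib)

lemma TD_add: "1 \<le> x \<Longrightarrow> 1 \<le> h \<Longrightarrow> T relD N ((x + h) # t) m b = (if b then 0 else 1 / real m ^ x * T relD N (h # t) m False)"
  by (cases t) (auto simp: w_def power_add)

lemma sum_le_split:
  fixes m :: nat
  assumes "m \<in> M" "finite M"
  shows "(\<Sum>m'\<in>M. if m \<le> m' then f m' else 0) = (\<Sum>m'\<in>M. if m < m' then f m' else 0) + (f m :: real)"
proof -
  have "(\<Sum>m'\<in>M. if m \<le> m' then f m' else 0) = (\<Sum>m'\<in>M. (if m < m' then f m' else 0) + (if m' = m then f m' else 0))"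
    by (rule sum.cong) auto
  also have "\<dots> = (\<Sum>m'\<in>M. if m < m' then f m' else 0) + (\<Sum>m'\<in>M. if m' = m then f m' else 0)"
    by (rule sum.distrib)
  also have "(\<Sum>m'\<in>M. if m' = m then f m' else 0) = f m" using assms by (simp add: sum.delta')
  finally show ?thesis .
qed

lemma fill_main:
  assumes "\<forall>y\<in>set (x # xs). 0 < y" "m \<in> {1..N-1}"
  shows "sum_list (map (\<lambda>l. T relD N l m b) (fillings (x # xs))) = T relS N (x # xs) m b"
  using assms
proof (induction xs arbitrary: x m b)
  case Nil then show ?case by simp
next
  case (Cons y ys)
  let ?F = "fillings (y # ys)"
  have x1: "1 \<le> x" using Cons.prems by auto
  have IH: "m' \<in> {1..N-1} \<Longrightarrow> sum_list (map (\<lambda>l. T relD N l m' c) ?F) = T relS N (y # ys) m' c" for m' c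
    using Cons.IH[of y m' c] Cons.prems by auto
  have p1: "sum_list (map (\<lambda>l. T relD N (x # l) m b) ?F) = w N x m b * (\<Sum>m'\<in>{1..N-1}.
      (if relD b True m m' then T relS N (y # ys) m' True else 0) + (if relD b False m m' then T relS N (y # ys) m' False else 0))"
  proof -
    have "sum_list (map (\<lambda>l. T relD N (x # l) m b) ?F) = sum_list (map (\<lambda>l. w N x m b * (\<Sum>m'\<in>{1..N-1}.
      (if relD b True m m' then T relD N l m' True else 0) + (if relD b False m m' then T relD N l m' False else 0))) ?F)"
    proof (rule arg_cong[where f = sum_list], rule map_cong[OF refl])
      fix l assume "l \<in> set ?F"
      then have "l \<noteq> []" using fill_shape by blast
      then show "T relD N (x # l) m b = w N x m b * (\<Sum>m'\<in>{1..N-1}.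
      (if relD b True m m' then T relD N l m' True else 0) + (if relD b False m m' then T relD N l m' False else 0))"
        by (rule T_Cons)
    qed
    also have "\<dots> = w N x m b * (\<Sum>m'\<in>{1..N-1}.
      (if relD b True m m' then sum_list (map (\<lambda>l. T relD N l m' True) ?F) else 0) + (if relD b False m m' then sum_list (map (\<lambda>l. T relD N l m' False) ?F) else 0))"
      by (simp add: sum_list_const_mult sum_list_sum sum_list_add sum_list_if)
    also have "\<dots> = w N x m b * (\<Sum>m'\<in>{1..N-1}.
      (if relD b True m m' then T relS N (y # ys) m' True else 0) + (if relD b False m m' then T relS N (y # ys) m' False else 0))"
      by (intro arg_cong[where f = "\<lambda>z. w N x m b * z"] sum.cong refl) (simp add: IH)
    finally show ?thesis .
  qed
  have p2: "sum_list (map (\<lambda>l. T relD N (add_hd x l) m b) ?F) = (if b then 0 else 1 / real m ^ x * T relS N (y # ys) m False)"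
  proof -
    have "sum_list (map (\<lambda>l. T relD N (add_hd x l) m b) ?F) = sum_list (map (\<lambda>l. if b then 0 else 1 / real m ^ x * T relD N l m False) ?F)"
    proof (rule arg_cong[where f = sum_list], rule map_cong[OF refl])
      fix l assume "l \<in> set ?F"
      then obtain h t where ht: "l = h # t" "y \<le> h" using fill_shape by blast
      have "1 \<le> h" using ht Cons.prems by auto
      then show "T relD N (add_hd x l) m b = (if b then 0 else 1 / real m ^ x * T relD N l m False)"
        using TD_add[OF x1, of h N t m b] ht by simp
    qed
    also have "\<dots> = (if b then 0 else 1 / real m ^ x * sum_list (map (\<lambda>l. T relD N l m False) ?F))"
      by (cases b) (simp_all add: sum_list_div)
    finally show ?thesis using IH[OF Cons.prems(2)] by simp
  qed
  have "sum_list (map (\<lambda>l. T relD N l m b) (fillings (x # y # ys)))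
     = sum_list (map (\<lambda>l. T relD N (x # l) m b) ?F) + sum_list (map (\<lambda>l. T relD N (add_hd x l) m b) ?F)"
    by (simp add: comp_def)
  also have "\<dots> = T relS N (x # y # ys) m b"
  proof (cases b)
    case True
    then show ?thesis unfolding p1 p2 by (simp add: relD_def relS_def)
  next
    case False
    let ?ST = "\<lambda>m'. T relS N (y # ys) m' True" and ?SF = "\<lambda>m'. T relS N (y # ys) m' False"
    have "(\<Sum>m'\<in>{1..N-1}. (if m < m' then ?ST m' else 0) + (if m \<le> m' then ?SF m' else 0))
       = (\<Sum>m'\<in>{1..N-1}. (if m < m' then ?ST m' else 0)) + (\<Sum>m'\<in>{1..N-1}. (if m < m' then ?SF m' else 0)) + ?SF m"
      using sum_le_split[OF Cons.prems(2), of ?SF] by (simp add: sum.distrib)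
    moreover have "(\<Sum>m'\<in>{1..N-1}. (if m < m' then ?ST m' else 0) + (if m < m' then ?SF m' else 0))
       = (\<Sum>m'\<in>{1..N-1}. (if m < m' then ?ST m' else 0)) + (\<Sum>m'\<in>{1..N-1}. (if m < m' then ?SF m' else 0))"
      by (simp add: sum.distrib)
    ultimately show ?thesis unfolding p1 p2 using False
      by (simp add: relD_def relS_def w_def distrib_left)
  qed
  finally show ?case .
qed

lemma zd_T: "l \<noteq> [] \<Longrightarrow> zeta_diamond N l = (\<Sum>m\<in>{1..N-1}. T relD N l m True + T relD N l m False)"
  unfolding zeta_diamond_def S_set_Sg using main_gen[where \<phi>="\<lambda>_ _. True" and rel=relD and N=N and k=l] by simp

theorem mainTheorem11:
  fixes N :: nat and k :: "nat list"
  assumes "0 < N" and "admissible k"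
  shows "zeta_diamond_star N k =
    (\<Sum>A\<in>Pow (ones k). \<Sum>ns\<in>S_star_set (length k) N A. term_diamond N k A ns)"
proof -
  obtain x xs where k: "k = x # xs" using assms(2) unfolding admissible_def by (cases k) auto
  have pos: "\<forall>y\<in>set (x # xs). 0 < y" using assms(2) unfolding admissible_def is_index_def k by auto
  have "zeta_diamond_star N k = sum_list (map (\<lambda>l. \<Sum>m\<in>{1..N-1}. T relD N l m True + T relD N l m False) (fillings k))"
    unfolding zeta_diamond_star_def
  proof (rule arg_cong[where f = sum_list], rule map_cong[OF refl])
    fix l assume "l \<in> set (fillings k)"
    then have "l \<noteq> []" using fill_shape unfolding k by blast
    then show "zeta_diamond N l = (\<Sum>m\<in>{1..N-1}. T relD N l m True + T relD N l m False)" by (rule zd_T)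
  qed
  also have "\<dots> = (\<Sum>m\<in>{1..N-1}. sum_list (map (\<lambda>l. T relD N l m True) (fillings k)) + sum_list (map (\<lambda>l. T relD N l m False) (fillings k)))"
    by (simp add: sum_list_sum sum_list_add)
  also have "\<dots> = (\<Sum>m\<in>{1..N-1}. T relS N k m True + T relS N k m False)"
    unfolding k by (intro sum.cong refl) (simp add: fill_main[OF pos])
  also have "\<dots> = (\<Sum>A\<in>Pow (ones k). \<Sum>ns\<in>S_star_set (length k) N A. term_diamond N k A ns)"
    unfolding S_star_set_Sg using main_gen[where \<phi>="\<lambda>_ _. True" and rel=relS and N=N and k=k] k by simp
  finally show ?thesis .
qed

end
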